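(* For every nonempty graph $G$, the limit $\hat r_\infty(G)=\lim_{t\to\infty}\frac{\hat r(tK_2,G)}{t\,\hat r(K_2,G)}$ exists and \[\hat r_{\infty}(G)=\inf_{t\ge 1}\frac{\hat r(tK_2,G)}{t|E(G)|}.\] Moreover, $0\le \hat r_\infty(G)\le 1$, and $\hat r_\infty(G)=1$ if and only if $\hat r(tK_2,G)=t|E(G)|$ for every $t\ge 1$. In particular, for every integer $t\ge1$, $\hat r_\infty(G)\le \frac{\hat r(tK_2,G)}{t|E(G)|}$.
   Context: All graphs are finite and simple; a graph is nonempty if it has at least one edge. $tK_2$ denotes a matching with $t$ edges. For graphs $F,G,H$, $F\to(G,H)$ means every red--blue coloring of $E(F)$ contains a red copy of $G$ or a blue copy of $H$, and $\hat r(G,H)=\min\{|E(F)|:F\to(G,H)\}$. *)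

theory Defs
  imports Complex_Main
begin

text \<open>A finite simple graph is represented by its (finite) edge set; every edge is a
  2-element set of vertices. Isolated vertices are irrelevant for containment of copies
  and for size Ramsey numbers.\<close>

definition simple_graph :: "'a set set \<Rightarrow> bool" where
  "simple_graph E \<longleftrightarrow> finite E \<and> (\<forall>e\<in>E. card e = 2)"

definition has_copy :: "'a set set \<Rightarrow> 'b set set \<Rightarrow> bool" where
  "has_copy G H \<longleftrightarrow> (\<exists>f. inj_on f (\<Union>G) \<and> (\<forall>e\<in>G. f ` e \<in> H))"

definition arrows :: "nat set set \<Rightarrow> 'a set set \<Rightarrow> 'b set set \<Rightarrow> bool" where
  "arrows F G H \<longleftrightarrow> (\<forall>R\<subseteq>F. has_copy G R \<or> has_copy H (F - R))"

text \<open>Size Ramsey number (host graphs on vertex type nat, w.l.o.g.).\<close>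
definition size_ramsey :: "'a set set \<Rightarrow> 'b set set \<Rightarrow> nat" where
  "size_ramsey G H = (LEAST m. \<exists>F. simple_graph F \<and> card F = m \<and> arrows F G H)"

definition matching :: "nat \<Rightarrow> nat set set" where
  "matching t = {{2*i, 2*i+1} | i. i < t}"

end

theory Submission
  imports Defs
begin

lemma union_matching: "\<Union>(matching n) = {..<2*n}"
proof
  show "\<Union>(matching n) \<subseteq> {..<2*n}" by (auto simp: matching_def)
next
  show "{..<2*n} \<subseteq> \<Union>(matching n)"
  proof
    fix x assume "x \<in> {..<2*n}"
    then have i: "x div 2 < n" by auto
    have "x = 2*(x div 2) \<or> x = 2*(x div 2)+1" by presburger
    then have "x \<in> {2*(x div 2), 2*(x div 2)+1}" by auto
    moreover have "{2*(x div 2), 2*(x div 2)+1} \<in> matching n"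
      using i unfolding matching_def by blast
    ultimately show "x \<in> \<Union>(matching n)" by blast
  qed
qed

lemma has_copy_mono: "has_copy G H \<Longrightarrow> H \<subseteq> H' \<Longrightarrow> has_copy G H'"
  unfolding has_copy_def by blast

lemma has_copy_img:
  assumes "has_copy G H" "inj h"
  shows "has_copy G ((`) h ` H)"
proof -
  obtain f where f: "inj_on f (\<Union>G)" "\<forall>e\<in>G. f ` e \<in> H" using assms(1) unfolding has_copy_def by blast
  have "inj_on (h \<circ> f) (\<Union>G)" using f(1) assms(2) by (simp add: comp_inj_on inj_on_subset)
  moreover have "\<forall>e\<in>G. (h \<circ> f) ` e \<in> (`) h ` H" using f(2) by (metis image_comp imageI)
  ultimately show ?thesis unfolding has_copy_def by blast
qed

lemma inj_image_map: "inj h \<Longrightarrow> inj ((`) h)"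
  by (metis injI inj_image_eq_iff)

lemma arrows_img:
  assumes "arrows F M G" "inj (h::nat \<Rightarrow> nat)"
  shows "arrows ((`) h ` F) M G"
  unfolding arrows_def
proof (intro allI impI)
  fix R assume R: "R \<subseteq> (`) h ` F"
  define R' where "R' = {e\<in>F. h ` e \<in> R}"
  have R'F: "R' \<subseteq> F" unfolding R'_def by auto
  have e1: "(`) h ` R' = R" using R unfolding R'_def by auto
  have e2: "(`) h ` (F - R') = (`) h ` F - R"
    using image_set_diff[OF inj_image_map[OF assms(2)], of F R'] e1 by simp
  from assms(1) R'F have "has_copy M R' \<or> has_copy G (F - R')" unfolding arrows_def by blast
  then show "has_copy M R \<or> has_copy G ((`) h ` F - R)"
    using has_copy_img[OF _ assms(2)] e1 e2 by metis
qed

lemma simple_img: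
  assumes "simple_graph F" "inj (h::nat \<Rightarrow> nat)"
  shows "simple_graph ((`) h ` F) \<and> card ((`) h ` F) = card F"
proof -
  have "card ((`) h ` F) = card F"
    using card_image[of "(`) h" F] inj_image_map[OF assms(2)] by (simp add: inj_on_subset)
  moreover have "\<forall>e\<in>F. card (h ` e) = card e"
    using assms(2) by (simp add: card_image inj_on_subset)
  ultimately show ?thesis using assms(1) unfolding simple_graph_def by auto
qed

lemma glue:
  assumes "has_copy (matching s) R1" "has_copy (matching t) R2" "\<Union>R1 \<inter> \<Union>R2 = {}"
  shows "has_copy (matching (s+t)) (R1 \<union> R2)"
proof -
  obtain f1 where f1: "inj_on f1 {..<2*s}" "\<forall>e\<in>matching s. f1`e \<in> R1"
    using assms(1) unfolding has_copy_def union_matching by blast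
  obtain f2 where f2: "inj_on f2 {..<2*t}" "\<forall>e\<in>matching t. f2`e \<in> R2"
    using assms(2) unfolding has_copy_def union_matching by blast
  define f where "f = (\<lambda>x. if x < 2*s then f1 x else f2 (x - 2*s))"
  have im1: "f1 x \<in> \<Union>R1" if "x < 2*s" for x
  proof -
    from that have "x \<in> \<Union>(matching s)" by (simp add: union_matching)
    then obtain e where "e \<in> matching s" "x \<in> e" by blast
    then show ?thesis using f1(2) by blast
  qed
  have im2: "f2 x \<in> \<Union>R2" if "x < 2*t" for x
  proof -
    from that have "x \<in> \<Union>(matching t)" by (simp add: union_matching)
    then obtain e where "e \<in> matching t" "x \<in> e" by blast
    then show ?thesis using f2(2) by blast
  qed
  have inj: "inj_on f {..<2*(s+t)}"
    unfolding inj_on_def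
  proof (intro ballI impI)
    fix x y assume x: "x \<in> {..<2*(s+t)}" and y: "y \<in> {..<2*(s+t)}" and fxy: "f x = f y"
    show "x = y"
    proof (cases "x < 2*s")
      case True
      show ?thesis
      proof (cases "y < 2*s")
        case True
        then show ?thesis using \<open>x < 2*s\<close> fxy f1(1) unfolding f_def inj_on_def by auto
      next
        case False
        then have "f y \<in> \<Union>R2" using y im2[of "y - 2*s"] unfolding f_def by auto
        moreover have "f x \<in> \<Union>R1" using \<open>x < 2*s\<close> im1 unfolding f_def by auto
        ultimately show ?thesis using fxy assms(3) by auto
      qed
    next
      case False
      show ?thesis
      proof (cases "y < 2*s")
        case True
        then have "f y \<in> \<Union>R1" using im1 unfolding f_def by auto
        moreover have "f x \<in> \<Union>R2" using False x im2[of "x - 2*s"] unfolding f_def by auto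
        ultimately show ?thesis using fxy assms(3) by auto
      next
        case False2: False
        have "x - 2*s = y - 2*s" using False False2 fxy f2(1) x y unfolding f_def inj_on_def by auto
        then show ?thesis using False False2 by auto
      qed
    qed
  qed
  have edges: "\<forall>e\<in>matching (s+t). f ` e \<in> R1 \<union> R2"
  proof
    fix e assume "e \<in> matching (s+t)"
    then obtain i where e: "e = {2*i, 2*i+1}" "i < s+t" unfolding matching_def by blast
    show "f ` e \<in> R1 \<union> R2"
    proof (cases "i < s")
      case True
      have "f ` e = f1 ` {2*i, 2*i+1}" using True e unfolding f_def by auto
      moreover have "{2*i, 2*i+1} \<in> matching s" using True unfolding matching_def by blast
      ultimately show ?thesis using f1(2) by auto
    next
      case False
      have a: "2*i - 2*s = 2*(i-s)" "2*i+1 - 2*s = 2*(i-s)+1" using False by auto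
      have fe: "f ` e = f2 ` {2*(i-s), 2*(i-s)+1}" using False e a unfolding f_def by auto
      have "i - s < t" using False e(2) by simp
      then have "{2*(i-s), 2*(i-s)+1} \<in> matching t" unfolding matching_def by blast
      then show ?thesis using f2(2) fe by auto
    qed
  qed
  show ?thesis unfolding has_copy_def union_matching using inj edges by blast
qed

lemma simple_finite_vertices: "simple_graph F \<Longrightarrow> finite (\<Union>F)"
  unfolding simple_graph_def by (metis card.infinite finite_Union zero_neq_numeral)

lemma combine:
  assumes "simple_graph F1" "arrows F1 (matching s) G" "simple_graph F2" "arrows F2 (matching t) G"
  shows "\<exists>F. simple_graph F \<and> card F \<le> card F1 + card F2 \<and> arrows F (matching (s+t)) G"
proof -
  obtain N where N: "\<forall>x\<in>\<Union>F1. x < N"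
    using simple_finite_vertices[OF assms(1)] finite_nat_set_iff_bounded by auto
  define h where "h = (\<lambda>x::nat. x + N)"
  have injh: "inj h" unfolding h_def inj_on_def by auto
  define F2' where "F2' = (`) h ` F2"
  have s2: "simple_graph F2'" "card F2' = card F2"
    using simple_img[OF assms(3) injh] unfolding F2'_def by auto
  have a2: "arrows F2' (matching t) G" unfolding F2'_def by (rule arrows_img[OF assms(4) injh])
  have disj: "\<forall>x\<in>\<Union>F2'. N \<le> x" unfolding F2'_def h_def by auto
  define F where "F = F1 \<union> F2'"
  have sF: "simple_graph F" using assms(1) s2(1) unfolding F_def simple_graph_def by auto
  have cF: "card F \<le> card F1 + card F2" unfolding F_def using card_Un_le[of F1 F2'] s2(2) by simp
  have "arrows F (matching (s+t)) G"
    unfolding arrows_def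
  proof (intro allI impI)
    fix R assume R: "R \<subseteq> F"
    have c1: "has_copy (matching s) (R \<inter> F1) \<or> has_copy G (F1 - R \<inter> F1)"
      using assms(2) unfolding arrows_def by blast
    have c2: "has_copy (matching t) (R \<inter> F2') \<or> has_copy G (F2' - R \<inter> F2')"
      using a2 unfolding arrows_def by blast
    have sub1: "F1 - R \<inter> F1 \<subseteq> F - R" "F2' - R \<inter> F2' \<subseteq> F - R" unfolding F_def by auto
    have dj: "\<Union>(R \<inter> F1) \<inter> \<Union>(R \<inter> F2') = {}" using N disj by fastforce
    have sub2: "(R \<inter> F1) \<union> (R \<inter> F2') \<subseteq> R" by auto
    show "has_copy (matching (s+t)) R \<or> has_copy G (F - R)"
      using c1 c2 has_copy_mono[OF _ sub1(1)] has_copy_mono[OF _ sub1(2)]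
        has_copy_mono[OF glue[OF _ _ dj] sub2] by blast
  qed
  then show ?thesis using sF cF by blast
qed

lemma copy_card:
  assumes "has_copy G F" "finite F"
  shows "card G \<le> card F"
proof -
  obtain f where f: "inj_on f (\<Union>G)" "\<forall>e\<in>G. f ` e \<in> F" using assms(1) unfolding has_copy_def by blast
  have "inj_on ((`) f) G"
    unfolding inj_on_def using inj_on_image_eq_iff[OF f(1)] by (meson Union_upper)
  moreover have "(`) f ` G \<subseteq> F" using f(2) by auto
  ultimately show ?thesis using card_inj_on_le assms(2) by blast
qed

lemma m1: "matching 1 = {{0,1}}"
proof -
  have "matching 1 = {{2*i, 2*i+1} | i::nat. i = 0}" unfolding matching_def by simp
  also have "\<dots> = {{0,1}}" by simp
  finally show ?thesis .
qed

lemma matching1_ne: "matching 1 \<noteq> {}"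
  unfolding m1 by blast

lemma arrows1_lower:
  assumes "arrows F (matching 1) G" "finite F"
  shows "card G \<le> card F"
proof -
  from assms(1) have all: "\<forall>R\<subseteq>F. has_copy (matching 1) R \<or> has_copy G (F - R)" by (simp add: arrows_def)
  have "has_copy (matching 1) ({}::nat set set) \<or> has_copy G F" using spec[OF all, of "{}"] by simp
  moreover have "\<not> has_copy (matching 1) ({}::nat set set)" unfolding has_copy_def m1 by simp
  ultimately have "has_copy G F" by simp
  then show ?thesis using copy_card assms(2) by blast
qed


lemma arrows1_upper:
  assumes "simple_graph (G :: 'a set set)"
  shows "\<exists>F. simple_graph F \<and> card F = card G \<and> arrows F (matching 1) G"
proof -
  obtain g :: "'a \<Rightarrow> nat" where g: "inj_on g (\<Union>G)"
    using finite_imp_inj_to_nat_seg[OF simple_finite_vertices[OF assms]] by blast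
  define F where "F = (`) g ` G"
  have inj: "inj_on ((`) g) G"
    unfolding inj_on_def using inj_on_image_eq_iff[OF g] by (meson Union_upper)
  have cF: "card F = card G" unfolding F_def using card_image[OF inj] .
  have "\<forall>e\<in>G. card (g ` e) = card e"
    using g by (meson Union_upper card_image inj_on_subset)
  then have sF: "simple_graph F" using assms unfolding F_def simple_graph_def by auto
  have cp: "has_copy G F" unfolding has_copy_def F_def using g by blast
  have "arrows F (matching 1) G"
    unfolding arrows_def
  proof (intro allI impI)
    fix R assume R: "R \<subseteq> F"
    show "has_copy (matching 1) R \<or> has_copy G (F - R)"
    proof (cases "R = {}")
      case True then show ?thesis using cp by simp
    next
      case False
      then obtain e where e: "e \<in> R" by blast
      then have "card e = 2" using R sF unfolding simple_graph_def by auto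
      then obtain x y where xy: "e = {x, y}" "x \<noteq> y" by (meson card_2_iff)
      define f where "f = (\<lambda>n::nat. if n = 0 then x else y)"
      have "inj_on f {0,1}" unfolding f_def inj_on_def using xy by auto
      moreover have "f ` {0,1} = e" unfolding f_def using xy by auto
      ultimately have "has_copy (matching 1) R" unfolding has_copy_def m1 using e by auto
      then show ?thesis by blast
    qed
  qed
  then show ?thesis using sF cF by blast
qed

lemma sr_props:
  assumes "\<exists>F. simple_graph F \<and> arrows F M G"
  shows "\<exists>F. simple_graph F \<and> card F = size_ramsey M G \<and> arrows F M G"
    and "\<And>F. simple_graph F \<Longrightarrow> arrows F M G \<Longrightarrow> size_ramsey M G \<le> card F"
proof -
  obtain F0 where "simple_graph F0" "arrows F0 M G" using assms by blast
  then have ex: "\<exists>F. simple_graph F \<and> card F = card F0 \<and> arrows F M G" by blast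
  show "\<exists>F. simple_graph F \<and> card F = size_ramsey M G \<and> arrows F M G"
    unfolding size_ramsey_def
    using LeastI_ex[of "\<lambda>m. \<exists>F. simple_graph F \<and> card F = m \<and> arrows F M G"] ex by blast
  fix F assume "simple_graph F" "arrows F M G"
  then show "size_ramsey M G \<le> card F" unfolding size_ramsey_def by (auto intro: Least_le)
qed

lemma exists_arrow:
  assumes "simple_graph G"
  shows "\<exists>F. simple_graph F \<and> arrows F (matching t) G"
proof (induction t)
  case 0
  have "arrows {} (matching 0) G" unfolding arrows_def has_copy_def matching_def by auto
  moreover have "simple_graph {}" unfolding simple_graph_def by auto
  ultimately show ?case by blast
next
  case (Suc t)
  then obtain F1 where "simple_graph F1" "arrows F1 (matching t) G" by blast
  moreover obtain F2 where "simple_graph F2" "arrows F2 (matching 1) G"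
    using arrows1_upper[OF assms] by blast
  ultimately show ?case using combine[of F1 t G F2 1] by auto
qed

lemma sr_subadd:
  assumes "simple_graph G"
  shows "size_ramsey (matching (s+t)) G \<le> size_ramsey (matching s) G + size_ramsey (matching t) G"
proof -
  obtain F1 where F1: "simple_graph F1" "card F1 = size_ramsey (matching s) G" "arrows F1 (matching s) G"
    using sr_props(1)[OF exists_arrow[OF assms]] by blast
  obtain F2 where F2: "simple_graph F2" "card F2 = size_ramsey (matching t) G" "arrows F2 (matching t) G"
    using sr_props(1)[OF exists_arrow[OF assms]] by blast
  obtain F where F: "simple_graph F" "card F \<le> card F1 + card F2" "arrows F (matching (s+t)) G"
    using combine[OF F1(1,3) F2(1,3)] by blast
  have "size_ramsey (matching (s+t)) G \<le> card F"
    using sr_props(2)[OF exists_arrow[OF assms] F(1,3)] .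
  then show ?thesis using F(2) F1(2) F2(2) by simp
qed

lemma sr_one:
  assumes "simple_graph G"
  shows "size_ramsey (matching 1) G = card G"
proof -
  obtain F where F: "simple_graph F" "card F = size_ramsey (matching 1) G" "arrows F (matching 1) G"
    using sr_props(1)[OF exists_arrow[OF assms]] by blast
  have "card G \<le> size_ramsey (matching 1) G"
    using arrows1_lower[OF F(3)] F(1,2) unfolding simple_graph_def by auto
  moreover obtain F' where F': "simple_graph F'" "card F' = card G" "arrows F' (matching 1) G"
    using arrows1_upper[OF assms] by blast
  have "size_ramsey (matching 1) G \<le> card G"
    using sr_props(2)[OF exists_arrow[OF assms] F'(1,3)] F'(2) by simp
  ultimately show ?thesis by simp
qed


lemma fekete:
  fixes u :: "nat \<Rightarrow> real"
  assumes nn: "\<And>n. 0 \<le> u n" and sub: "\<And>m n. u (m+n) \<le> u m + u n"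
  shows "(\<lambda>n. u n / real n) \<longlonglongrightarrow> (INF n\<in>{1..}. u n / real n)"
proof -
  define I where "I = (INF n\<in>{1::nat..}. u n / real n)"
  have bdd: "bdd_below ((\<lambda>n. u n / real n) ` {1..})"
    by (rule bdd_belowI2[of _ 0]) (simp add: nn)
  have low: "I \<le> u n / real n" if "n \<ge> 1" for n
    unfolding I_def using bdd that by (intro cINF_lower) auto
  have mult: "u (q*k + r) \<le> real q * u k + u r" for q k r
  proof (induction q)
    case 0 then show ?case by simp
  next
    case (Suc q)
    have "u (Suc q * k + r) = u (k + (q*k + r))" by (simp add: add.assoc)
    also have "\<dots> \<le> u k + u (q*k+r)" by (rule sub)
    also have "\<dots> \<le> real (Suc q) * u k + u r" using Suc by (simp add: algebra_simps)
    finally show ?case .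
  qed
  show ?thesis
    unfolding I_def[symmetric]
  proof (rule LIMSEQ_I)
    fix \<epsilon> :: real assume e: "\<epsilon> > 0"
    have lt: "I < I + \<epsilon>/2" using e by simp
    have ne: "{1::nat..} \<noteq> {}" by auto
    have ex: "\<exists>x\<in>{1::nat..}. u x / real x < I + \<epsilon>/2"
      using lt cINF_less_iff[OF ne bdd, of "I + \<epsilon>/2"] unfolding I_def by blast
    then obtain k where k: "k \<ge> 1" "u k / real k < I + \<epsilon>/2" by auto
    define M where "M = (\<Sum>r<k. u r)"
    have M: "u r \<le> M" if "r < k" for r
      unfolding M_def using that nn by (intro member_le_sum) auto
    have M0: "0 \<le> M" unfolding M_def using nn by (simp add: sum_nonneg)
    obtain N0 :: nat where N0: "2 * M / \<epsilon> < real N0" using reals_Archimedean2 by blast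
    define N where "N = max k N0 + 1"
    have "\<forall>n\<ge>N. norm (u n / real n - I) < \<epsilon>"
    proof (intro allI impI)
      fix n assume n: "n \<ge> N"
      then have n1: "n \<ge> 1" and nk: "n \<ge> k" and nN0: "real n > real N0" unfolding N_def by auto
      define q where "q = n div k"
      define r where "r = n mod k"
      have nqr: "n = q*k + r" unfolding q_def r_def by simp
      have rk: "r < k" unfolding r_def using k(1) by simp
      have un: "u n \<le> real q * u k + M" using mult[of q k r] M[OF rk] nqr by simp
      have npos: "real n > 0" using n1 by simp
      have kpos: "real k > 0" using k(1) by simp
      have qk: "real q * real k \<le> real n" using nqr by (metis le_add1 of_nat_le_iff of_nat_mult)
      have t1: "real q * u k / real n \<le> u k / real k"
      proof -
        have "real q * u k * real k \<le> u k * real n"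
          using mult_left_mono[OF qk nn[of k]] by (simp add: algebra_simps)
        then show ?thesis using npos kpos by (simp add: field_simps)
      qed
      have t2: "M / real n < \<epsilon>/2"
      proof -
        have "2 * M < \<epsilon> * real N0" using N0 e by (simp add: field_simps)
        also have "\<dots> \<le> \<epsilon> * real n" using nN0 e by simp
        finally show ?thesis using npos by (simp add: field_simps)
      qed
      have "u n / real n \<le> real q * u k / real n + M / real n"
        using un npos by (simp add: add_divide_distrib[symmetric] divide_right_mono)
      then have up: "u n / real n < I + \<epsilon>" using t1 t2 k(2) by linarith
      have lo: "I \<le> u n / real n" using low[OF n1] .
      show "norm (u n / real n - I) < \<epsilon>" using up lo by simp
    qed
    then show "\<exists>no. \<forall>n\<ge>no. norm (u n / real n - I) < \<epsilon>" by blast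
  qed
qed

theorem corollary2p4:
  fixes G :: "'a set set"
  assumes "simple_graph G" and "G \<noteq> {}"
  shows "\<exists>L::real.
     ((\<lambda>t. real (size_ramsey (matching t) G) / (real t * real (size_ramsey (matching 1) G)))
        \<longlonglongrightarrow> L)
   \<and> L = (INF t\<in>{1::nat..}. real (size_ramsey (matching t) G) / (real t * real (card G)))
   \<and> 0 \<le> L \<and> L \<le> 1
   \<and> (L = 1 \<longleftrightarrow> (\<forall>t\<ge>1. size_ramsey (matching t) G = t * card G))
   \<and> (\<forall>t::nat\<ge>1. L \<le> real (size_ramsey (matching t) G) / (real t * real (card G)))"
proof -
  define A where "A t = size_ramsey (matching t) G" for t
  define m where "m = real (card G)"
  have A1: "A 1 = card G" unfolding A_def using sr_one[OF assms(1)] .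
  have mpos: "m > 0" unfolding m_def using assms unfolding simple_graph_def
    by (simp add: card_gt_0_iff)
  have subA: "A (s+t) \<le> A s + A t" for s t unfolding A_def by (rule sr_subadd[OF assms(1)])
  have upA: "A t \<le> t * card G" for t
  proof (induction t)
    case 0
    have "size_ramsey (matching 0) G \<le> card ({}::nat set set)"
      by (rule sr_props(2)[OF exists_arrow[OF assms(1)]])
         (auto simp: simple_graph_def arrows_def has_copy_def matching_def)
    then show ?case unfolding A_def by simp
  next
    case (Suc t) then show ?case using subA[of t 1] A1 by simp
  qed
  define u where "u n = real (A n) / m" for n
  have fu: "(\<lambda>n. u n / real n) \<longlonglongrightarrow> (INF n\<in>{1..}. u n / real n)"
  proof (rule fekete)
    show "0 \<le> u n" for n unfolding u_def using mpos by simp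
    show "u (s+t) \<le> u s + u t" for s t
      unfolding u_def using subA[of s t] mpos by (simp add: add_divide_distrib[symmetric] divide_right_mono)
  qed
  have eq: "u n / real n = real (A n) / (real n * m)" for n unfolding u_def by simp
  define L where "L = (INF t\<in>{1::nat..}. real (A t) / (real t * m))"
  have lim: "(\<lambda>t. real (A t) / (real t * real (A 1))) \<longlonglongrightarrow> L"
    using fu unfolding eq L_def A1 m_def .
  have bdd: "bdd_below ((\<lambda>t. real (A t) / (real t * m)) ` {1..})"
    by (rule bdd_belowI2[of _ 0]) (use mpos in simp)
  have low: "L \<le> real (A t) / (real t * m)" if "t \<ge> 1" for t
    unfolding L_def using bdd that by (intro cINF_lower) auto
  have L0: "0 \<le> L" unfolding L_def using mpos by (intro cINF_greatest) auto
  have L1: "L \<le> 1" using low[of 1] A1 mpos unfolding m_def by simp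
  have iff: "L = 1 \<longleftrightarrow> (\<forall>t\<ge>1. A t = t * card G)"
  proof
    assume L: "L = 1"
    show "\<forall>t\<ge>1. A t = t * card G"
    proof (intro allI impI)
      fix t :: nat assume t: "t \<ge> 1"
      have "1 \<le> real (A t) / (real t * m)" using low[OF t] L by simp
      then have "real t * m \<le> real (A t)" using t mpos by (simp add: field_simps)
      then have "t * card G \<le> A t" unfolding m_def by (metis of_nat_le_iff of_nat_mult)
      then show "A t = t * card G" using upA[of t] by simp
    qed
  next
    assume all: "\<forall>t\<ge>1. A t = t * card G"
    have "L = (INF t\<in>{1::nat..}. (1::real))"
      unfolding L_def
    proof (rule INF_cong)
      fix t :: nat assume "t \<in> {1..}"
      then show "real (A t) / (real t * m) = 1" using all mpos unfolding m_def by simp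
    qed simp
    then show "L = 1" by simp
  qed
  show ?thesis
  proof (intro exI[of _ L] conjI)
    show "(\<lambda>t. real (size_ramsey (matching t) G) / (real t * real (size_ramsey (matching 1) G)))
        \<longlonglongrightarrow> L" using lim unfolding A_def .
    show "L = (INF t\<in>{1::nat..}. real (size_ramsey (matching t) G) / (real t * real (card G)))"
      unfolding L_def A_def m_def ..
    show "0 \<le> L" by (rule L0)
    show "L \<le> 1" by (rule L1)
    show "L = 1 \<longleftrightarrow> (\<forall>t\<ge>1. size_ramsey (matching t) G = t * card G)"
      using iff unfolding A_def .
    show "\<forall>t::nat\<ge>1. L \<le> real (size_ramsey (matching t) G) / (real t * real (card G))"
      using low unfolding A_def m_def by blast
  qed
qed

end
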